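(* Suppose that for every $m\ge 1$, any $2m$ mass distributions in $\mathbb{R}^2$ can be simultaneously bisected by an arrangement of $m$ lines. Then for every $n\ge 1$ and any $n$ valuation functions $v_1,\ldots,v_n$ on $[0,1]$, there exist at most $n$ cut points partitioning $[0,1]$ into at most $n+1$ intervals, each labeled "$+$" or "$-$" with consecutive intervals receiving different labels, such that $v_i(\mathcal{I}^+)=v_i(\mathcal{I}^-)$ for all $i$, where $\mathcal{I}^{\pm}$ is the union of the intervals labeled "$\pm$".
   Context: A mass distribution $\mu$ on $\mathbb{R}^d$ is a measure on $\mathbb{R}^d$ such that all open sets are measurable, $0<\mu(\mathbb{R}^d)<\infty$, and $\mu(S)=0$ for every subset $S$ contained in a lower-dimensional affine subspace (for $d=1$: every point has measure zero). A valuation function on $[0,1]$ is such a mass distribution supported on $[0,1]$. For an arrangement $A=(\ell_1,\ldots,\ell_m)$ of oriented lines in $\mathbb{R}^2$, let $R_i^+$ be the open positive side of $\ell_i$; $R^+(A)$ (resp. $R^-(A)$) is the set of points not on any $\ell_i$ lying in an even (resp. odd) number of the $R_i^+$. $A$ bisects a mass distribution $\mu$ if $\mu(R^+(A))=\mu(R^-(A))$. *)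

theory Defs
  imports "HOL-Analysis.Analysis"
begin

text \<open>For the real line this says that points have measure zero.\<close>
definition mass_distribution :: "'a::euclidean_space measure \<Rightarrow> bool" where
  "mass_distribution \<mu> \<longleftrightarrow>
     space \<mu> = UNIV \<and>
     (\<forall>S. open S \<longrightarrow> S \<in> sets \<mu>) \<and>
     0 < emeasure \<mu> UNIV \<and> emeasure \<mu> UNIV < \<infinity> \<and>
     (\<forall>A. affine A \<and> aff_dim A < int DIM('a) \<longrightarrow> emeasure \<mu> A = 0)"

definition valuation_function :: "real measure \<Rightarrow> bool" where
  "valuation_function v \<longleftrightarrow> mass_distribution v \<and> emeasure v (- {0..1}) = 0"

text \<open>An oriented line in the plane is a pair (w, c) with w nonzero; the line is
{x. w \<bullet> x = c} and its open positive side is {x. w \<bullet> x > c}.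
An arrangement is a list of oriented lines.\<close>
definition oriented_line :: "(real^2) \<times> real \<Rightarrow> bool" where
  "oriented_line l \<longleftrightarrow> fst l \<noteq> 0"

definition off_lines :: "((real^2) \<times> real) list \<Rightarrow> (real^2) set" where
  "off_lines A = {x. \<forall>i<length A. fst (A!i) \<bullet> x \<noteq> snd (A!i)}"

definition pos_count :: "((real^2) \<times> real) list \<Rightarrow> real^2 \<Rightarrow> nat" where
  "pos_count A x = card {i. i < length A \<and> fst (A!i) \<bullet> x > snd (A!i)}"

definition R_plus :: "((real^2) \<times> real) list \<Rightarrow> (real^2) set" where
  "R_plus A = {x \<in> off_lines A. even (pos_count A x)}"

definition R_minus :: "((real^2) \<times> real) list \<Rightarrow> (real^2) set" where
  "R_minus A = {x \<in> off_lines A. odd (pos_count A x)}"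

definition bisects :: "((real^2) \<times> real) list \<Rightarrow> (real^2) measure \<Rightarrow> bool" where
  "bisects A \<mu> \<longleftrightarrow> emeasure \<mu> (R_plus A) = emeasure \<mu> (R_minus A)"

end

theory Submission
  imports Defs "HOL-Computational_Algebra.Polynomial"
begin


definition gam :: "real \<Rightarrow> real^2" where "gam t = vector [t, t^2]"

lemma inner_gam: "w \<bullet> gam t = w$1 * t + w$2 * t^2"
  by (simp add: gam_def inner_vec_def sum_2)

lemma gam_cont: "continuous_on UNIV gam"
proof -
  have "gam = (\<lambda>t. \<chi> i. if i = 1 then t else t^2)"
    by (rule ext, simp add: gam_def vec_eq_iff forall_2)
  show ?thesis unfolding \<open>gam = _\<close>
    by (intro continuous_on_vec_lambda, case_tac "i = 1") (simp_all add: continuous_intros)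
qed

lemma gam_meas: "gam \<in> borel_measurable borel"
  by (rule borel_measurable_continuous_onI[OF gam_cont])

lemma borel_sub:
  assumes "space M = UNIV" "\<forall>S. open S \<longrightarrow> S \<in> sets M"
  shows "sets borel \<subseteq> sets M"
  unfolding sets_borel using sigma_algebra.sigma_sets_subset[of "space M" "sets M" "{S. open S}"] assms
  by (metis (no_types, lifting) mem_Collect_eq sets.sigma_algebra_axioms subsetI)

lemma meas_from:
  assumes "space M = UNIV" "\<forall>S. open S \<longrightarrow> S \<in> sets M" "f \<in> borel_measurable borel"
  shows "f \<in> measurable M borel"
  using assms borel_sub[OF assms(1,2)] unfolding measurable_def by (auto simp: Pi_iff)

lemma quad_roots:
  fixes a b c :: real assumes "a \<noteq> 0 \<or> b \<noteq> 0"
  shows "finite {t. a*t + b*t^2 = c}" "card {t. a*t + b*t^2 = c} \<le> 2"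
proof -
  let ?p = "[:-c, a, b:]"
  have p0: "?p \<noteq> 0" using assms by auto
  have eq: "{t. a*t + b*t^2 = c} = {x. poly ?p x = 0}"
    by (auto simp: algebra_simps power2_eq_square)
  show "finite {t. a*t + b*t^2 = c}" unfolding eq by (rule poly_roots_finite[OF p0])
  have "degree ?p \<le> 2" by (simp add: degree_pCons_le)
  then show "card {t. a*t + b*t^2 = c} \<le> 2" unfolding eq using card_poly_roots_bound[OF p0] by linarith
qed

lemma null_finite:
  assumes sp: "space M = UNIV" and op: "\<forall>S. open S \<longrightarrow> S \<in> sets M"
    and pt: "\<forall>x. emeasure M {x} = 0" and F: "finite (F::real set)"
  shows "emeasure M F = 0"
proof -
  have "\<And>x. {x} \<in> sets M" using borel_sub[OF sp op] by auto
  then show ?thesis using emeasure_eq_sum_singleton[OF F, of M] pt by simp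
qed

lemma push_md:
  assumes sp: "space \<nu> = UNIV" and op: "\<forall>S. open S \<longrightarrow> S \<in> sets \<nu>"
    and pos: "0 < emeasure \<nu> UNIV" and fin: "emeasure \<nu> UNIV < \<infinity>"
    and pt: "\<forall>x. emeasure \<nu> {x} = 0"
  shows "mass_distribution (distr \<nu> borel gam)"
proof -
  have meas: "gam \<in> measurable \<nu> borel" by (rule meas_from[OF sp op gam_meas])
  have U: "emeasure (distr \<nu> borel gam) UNIV = emeasure \<nu> UNIV"
    using emeasure_distr[OF meas, of UNIV] sp by simp
  have aff: "emeasure (distr \<nu> borel gam) A = 0"
    if h2: "aff_dim A < int DIM(real^2)" for A
  proof -
    obtain a b where a: "a \<noteq> 0" "A \<subseteq> {x. a \<bullet> x = b}"
      using aff_lowdim_subset_hyperplane[OF h2] by blast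
    have a12: "a$1 \<noteq> 0 \<or> a$2 \<noteq> 0" using a(1) by (auto simp: vec_eq_iff forall_2)
    let ?F = "{t. a$1*t + a$2*t^2 = b}"
    have Ff: "finite ?F" using quad_roots[OF a12] by blast
    show ?thesis
    proof (cases "A \<in> sets borel")
      case False
      then show ?thesis by (simp add: emeasure_notin_sets)
    next
      case True
      have "emeasure (distr \<nu> borel gam) A = emeasure \<nu> (gam -` A)"
        using emeasure_distr[OF meas True] sp by simp
      also have "\<dots> \<le> emeasure \<nu> ?F"
      proof (rule emeasure_mono)
        show "gam -` A \<subseteq> ?F" using a(2) by (auto simp: inner_gam)
        show "?F \<in> sets \<nu>" using borel_sub[OF sp op] Ff by (auto intro: finite_imp_closed)
      qed
      also have "\<dots> = 0" by (rule null_finite[OF sp op pt Ff])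
      finally show ?thesis by simp
    qed
  qed
  show ?thesis unfolding mass_distribution_def
    using U pos fin aff by (auto simp: borel_open)
qed



definition Zs :: "((real^2) \<times> real) list \<Rightarrow> real set" where
  "Zs A = {t. \<exists>i<length A. fst (A!i) \<bullet> gam t = snd (A!i)}"

definition Ls :: "((real^2) \<times> real) list \<Rightarrow> real \<Rightarrow> bool" where
  "Ls A t = even (pos_count A (gam t))"

lemma pre_plus: "gam -` R_plus A = {t. t \<notin> Zs A \<and> Ls A t}"
  by (auto simp: R_plus_def off_lines_def Zs_def Ls_def)

lemma pre_minus: "gam -` R_minus A = {t. t \<notin> Zs A \<and> \<not> Ls A t}"
  by (auto simp: R_minus_def off_lines_def Zs_def Ls_def)

lemma region_open: "open {x \<in> off_lines A. P (pos_count A x)}"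
proof -
  let ?C = "\<lambda>S. \<Inter>i\<in>{..<length A}. (if i \<in> S then {x. fst (A!i) \<bullet> x > snd (A!i)} else {x. fst (A!i) \<bullet> x < snd (A!i)})"
  have eq: "{x \<in> off_lines A. P (pos_count A x)} = (\<Union>S\<in>{S. S \<subseteq> {..<length A} \<and> P (card S)}. ?C S)"
  proof (intro equalityI subsetI)
    fix x assume x: "x \<in> {x \<in> off_lines A. P (pos_count A x)}"
    let ?S = "{i. i < length A \<and> fst (A!i) \<bullet> x > snd (A!i)}"
    have "x \<in> ?C ?S" using x by (auto simp: off_lines_def order.strict_iff_order)
    moreover have "?S \<in> {S. S \<subseteq> {..<length A} \<and> P (card S)}" using x by (auto simp: pos_count_def)
    ultimately show "x \<in> (\<Union>S\<in>{S. S \<subseteq> {..<length A} \<and> P (card S)}. ?C S)" by blast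
  next
    fix x assume "x \<in> (\<Union>S\<in>{S. S \<subseteq> {..<length A} \<and> P (card S)}. ?C S)"
    then obtain S where S: "S \<subseteq> {..<length A}" "P (card S)" "x \<in> ?C S" by blast
    have off: "x \<in> off_lines A" unfolding off_lines_def
    proof (safe)
      fix i assume i: "i < length A" "fst (A!i) \<bullet> x = snd (A!i)"
      have "x \<in> (if i \<in> S then {x. fst (A!i) \<bullet> x > snd (A!i)} else {x. fst (A!i) \<bullet> x < snd (A!i)})"
        using S(3) i(1) by blast
      then show False using i(2) by (auto split: if_splits)
    qed
    have "{i. i < length A \<and> fst (A!i) \<bullet> x > snd (A!i)} = S"
    proof (intro equalityI subsetI)
      fix i assume "i \<in> {i. i < length A \<and> fst (A!i) \<bullet> x > snd (A!i)}"
      then have i: "i < length A" "fst (A!i) \<bullet> x > snd (A!i)" by auto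
      have "x \<in> (if i \<in> S then {x. fst (A!i) \<bullet> x > snd (A!i)} else {x. fst (A!i) \<bullet> x < snd (A!i)})"
        using S(3) i(1) by blast
      then show "i \<in> S" using i(2) by (auto split: if_splits)
    next
      fix i assume i: "i \<in> S"
      then have il: "i < length A" using S(1) by auto
      have "x \<in> (if i \<in> S then {x. fst (A!i) \<bullet> x > snd (A!i)} else {x. fst (A!i) \<bullet> x < snd (A!i)})"
        using S(3) il by blast
      then show "i \<in> {i. i < length A \<and> fst (A!i) \<bullet> x > snd (A!i)}" using i il by auto
    qed
    then show "x \<in> {x \<in> off_lines A. P (pos_count A x)}" using off S(2) by (simp add: pos_count_def)
  qed
  have "open (?C S)" for S
    by (intro open_INT) (auto simp: open_halfspace_gt open_halfspace_lt)
  then show ?thesis unfolding eq by blast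
qed

lemma R_plus_borel: "R_plus A \<in> sets borel"
  using region_open[of A even] by (simp add: R_plus_def borel_open)

lemma R_minus_borel: "R_minus A \<in> sets borel"
  using region_open[of A odd] by (simp add: R_minus_def borel_open)

lemma Zs_fin:
  assumes "\<forall>l\<in>set A. oriented_line l"
  shows "finite (Zs A)" "card (Zs A) \<le> 2 * length A"
proof -
  let ?R = "\<lambda>i. {t. (fst (A!i))$1*t + (fst (A!i))$2*t^2 = snd (A!i)}"
  have eq: "Zs A = (\<Union>i\<in>{..<length A}. ?R i)" by (auto simp: Zs_def inner_gam)
  have nz: "(fst (A!i))$1 \<noteq> 0 \<or> (fst (A!i))$2 \<noteq> 0" if "i < length A" for i
  proof -
    have "fst (A!i) \<noteq> 0" using assms that nth_mem by (auto simp: oriented_line_def)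
    then show ?thesis by (auto simp: vec_eq_iff forall_2)
  qed
  show "finite (Zs A)" unfolding eq using quad_roots(1)[OF nz] by blast
  have "card (Zs A) \<le> (\<Sum>i<length A. card (?R i))" unfolding eq by (rule card_UN_le) simp
  also have "\<dots> \<le> (\<Sum>i<length A. 2)" by (rule sum_mono) (use quad_roots(2)[OF nz] in auto)
  finally show "card (Zs A) \<le> 2 * length A" by simp
qed

lemma sign_keep:
  fixes g :: "real \<Rightarrow> real"
  assumes "continuous_on {s..t} g" "s \<le> t" "\<forall>x\<in>{s..t}. g x \<noteq> 0"
  shows "g s > 0 \<longleftrightarrow> g t > 0"
proof
  assume "g s > 0" show "g t > 0"
  proof (rule ccontr)
    assume "\<not> g t > 0"
    then obtain x where "s \<le> x" "x \<le> t" "g x = 0" using IVT2'[of g t 0 s] assms \<open>g s > 0\<close> by force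
    then show False using assms by auto
  qed
next
  assume "g t > 0" show "g s > 0"
  proof (rule ccontr)
    assume "\<not> g s > 0"
    then obtain x where "s \<le> x" "x \<le> t" "g x = 0" using IVT'[of g s 0 t] assms \<open>g t > 0\<close> by force
    then show False using assms by auto
  qed
qed

lemma Ls_const_aux:
  assumes "s \<le> t" "{s..t} \<inter> Zs A = {}"
  shows "Ls A s = Ls A t"
proof -
  have "(fst (A!i) \<bullet> gam s - snd (A!i) > 0) \<longleftrightarrow> (fst (A!i) \<bullet> gam t - snd (A!i) > 0)" if "i < length A" for i
  proof (rule sign_keep[where g="\<lambda>x. fst (A!i) \<bullet> gam x - snd (A!i)"])
    show "s \<le> t" by (rule assms(1))
    show "continuous_on {s..t} (\<lambda>x. fst (A!i) \<bullet> gam x - snd (A!i))"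
      by (simp add: inner_gam continuous_intros)
    show "\<forall>x\<in>{s..t}. fst (A ! i) \<bullet> gam x - snd (A ! i) \<noteq> 0"
      using assms(2) that by (auto simp: Zs_def)
  qed
  then have "{i. i < length A \<and> fst (A!i) \<bullet> gam s > snd (A!i)} = {i. i < length A \<and> fst (A!i) \<bullet> gam t > snd (A!i)}"
    by auto
  then show ?thesis by (simp add: Ls_def pos_count_def)
qed

lemma Ls_const:
  assumes "{a<..<b} \<inter> Zs A = {}" "s \<in> {a<..<b}" "t \<in> {a<..<b}"
  shows "Ls A s = Ls A t"
proof (cases "s \<le> t")
  case True
  have "{s..t} \<subseteq> {a<..<b}" using assms(2,3) by auto
  then have "{s..t} \<inter> Zs A = {}" using assms(1) by blast
  then show ?thesis using Ls_const_aux True by blast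
next
  case False
  have "{t..s} \<subseteq> {a<..<b}" using assms(2,3) by auto
  then have "{t..s} \<inter> Zs A = {}" using assms(1) by blast
  then show ?thesis using Ls_const_aux False by (metis linear)
qed



lemma partition_exists:
  fixes Z :: "real set" and L :: "real \<Rightarrow> bool"
  assumes fin: "finite Z"
    and const: "\<And>a b s t. {a<..<b} \<inter> Z = {} \<Longrightarrow> s \<in> {a<..<b} \<Longrightarrow> t \<in> {a<..<b} \<Longrightarrow> L s = L t"
  shows "0 < b \<Longrightarrow> \<exists>k t lab. k \<le> card (Z \<inter> {0<..<b}) \<and> t 0 = 0 \<and> t (k+1) = b \<and>
     (\<forall>j\<le>k. t j < t (Suc j)) \<and> (\<forall>j<k. lab j \<noteq> lab (Suc j)) \<and>
     (\<forall>j\<le>k. \<forall>s. t j < s \<and> s < t (Suc j) \<and> s \<notin> Z \<longrightarrow> L s = lab j)"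
proof (induction "card (Z \<inter> {0<..<b})" arbitrary: b rule: less_induct)
  case less
  show ?case
  proof (cases "Z \<inter> {0<..<b} = {}")
    case True
    define t :: "nat \<Rightarrow> real" where "t = (\<lambda>j. if j = 0 then 0 else b)"
    define lab :: "nat \<Rightarrow> bool" where "lab = (\<lambda>j. L (b/2))"
    have "\<forall>s. t 0 < s \<and> s < t (Suc 0) \<and> s \<notin> Z \<longrightarrow> L s = lab 0"
    proof (intro allI impI)
      fix s assume "t 0 < s \<and> s < t (Suc 0) \<and> s \<notin> Z"
      then show "L s = lab 0" using const[of 0 b s "b/2"] True less.prems by (auto simp: t_def lab_def)
    qed
    then show ?thesis using less.prems
      by (intro exI[of _ 0] exI[of _ t] exI[of _ lab]) (auto simp: t_def)
  next
    case False
    define z where "z = Max (Z \<inter> {0<..<b})"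
    have fz: "finite (Z \<inter> {0<..<b})" using fin by auto
    have zin: "z \<in> Z \<inter> {0<..<b}" unfolding z_def using Max_in[OF fz False] .
    have zmax: "\<And>y. y \<in> Z \<inter> {0<..<b} \<Longrightarrow> y \<le> z" unfolding z_def using Max_ge[OF fz] by blast
    have eqset: "Z \<inter> {0<..<b} = insert z (Z \<inter> {0<..<z})"
      using zin zmax by force
    have cardeq: "card (Z \<inter> {0<..<b}) = Suc (card (Z \<inter> {0<..<z}))"
      unfolding eqset using fin by (subst card_insert_disjoint) auto
    have z0: "0 < z" using zin by auto
    have zb: "z < b" using zin by auto
    obtain k t lab where k: "k \<le> card (Z \<inter> {0<..<z})" and t0: "t 0 = 0" and tk: "t (k+1) = z"
      and inc: "\<forall>j\<le>k. t j < t (Suc j)" and alt: "\<forall>j<k. lab j \<noteq> lab (Suc j)"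
      and int: "\<forall>j\<le>k. \<forall>s. t j < s \<and> s < t (Suc j) \<and> s \<notin> Z \<longrightarrow> L s = lab j"
      using less.hyps[of z] cardeq z0 by auto
    have free: "{z<..<b} \<inter> Z = {}" using zmax z0 by force
    define lam where "lam = L ((z+b)/2)"
    have lamL: "L s = lam" if "z < s" "s < b" for s
      unfolding lam_def by (rule const[OF free]) (use that zb in auto)
    show ?thesis
    proof (cases "lam = lab k")
      case False
      define t' where "t' = t(k+2 := b)"
      define lab' where "lab' = lab(k+1 := lam)"
      have A: "k+1 \<le> card (Z \<inter> {0<..<b})" using k cardeq by simp
      have B: "\<forall>j\<le>k+1. t' j < t' (Suc j)"
      proof (intro allI impI)
        fix j assume "j \<le> k+1"
        then consider "j \<le> k" | "j = k+1" by linarith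
        then show "t' j < t' (Suc j)"
        proof cases
          case 1 then show ?thesis using inc by (auto simp: t'_def)
        next
          case 2 then show ?thesis using tk zb by (auto simp: t'_def)
        qed
      qed
      have C: "\<forall>j<k+1. lab' j \<noteq> lab' (Suc j)"
        using alt False by (auto simp: lab'_def less_Suc_eq)
      have D: "\<forall>j\<le>k+1. \<forall>s. t' j < s \<and> s < t' (Suc j) \<and> s \<notin> Z \<longrightarrow> L s = lab' j"
      proof (intro allI impI)
        fix j s assume j: "j \<le> k+1" and s: "t' j < s \<and> s < t' (Suc j) \<and> s \<notin> Z"
        then consider "j \<le> k" | "j = k+1" by linarith
        then show "L s = lab' j"
        proof cases
          case 1 then show ?thesis using int s by (auto simp: t'_def lab'_def)
        next
          case 2 then show ?thesis using s tk lamL by (auto simp: t'_def lab'_def)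
        qed
      qed
      show ?thesis
        by (intro exI[of _ "k+1"] exI[of _ t'] exI[of _ lab']) (use A B C D t0 in \<open>auto simp: t'_def\<close>)
    next
      case True
      define t' where "t' = t(k+1 := b)"
      have A: "k \<le> card (Z \<inter> {0<..<b})" using k cardeq by simp
      have B: "\<forall>j\<le>k. t' j < t' (Suc j)"
      proof (intro allI impI)
        fix j assume "j \<le> k"
        then consider "j < k" | "j = k" by linarith
        then show "t' j < t' (Suc j)"
        proof cases
          case 1 then show ?thesis using inc by (auto simp: t'_def)
        next
          case 2 then show ?thesis using inc tk zb by (auto simp: t'_def)
        qed
      qed
      have D: "\<forall>j\<le>k. \<forall>s. t' j < s \<and> s < t' (Suc j) \<and> s \<notin> Z \<longrightarrow> L s = lab j"
      proof (intro allI impI)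
        fix j s assume j: "j \<le> k" and s: "t' j < s \<and> s < t' (Suc j) \<and> s \<notin> Z"
        then consider "j < k" | "j = k" by linarith
        then show "L s = lab j"
        proof cases
          case 1 then show ?thesis using int s by (auto simp: t'_def)
        next
          case 2
          then have s2: "t k < s" "s < b" "s \<notin> Z" using s by (auto simp: t'_def)
          consider "s < z" | "s = z" | "s > z" by linarith
          then show ?thesis
          proof cases
            case 1 then show ?thesis using int s2 tk 2 by auto
          next
            case 2 then show ?thesis using zin s2 by auto
          next
            case 3 then show ?thesis using lamL s2 True \<open>j = k\<close> by auto
          qed
        qed
      qed
      have t0': "t' 0 = 0" using t0 by (auto simp: t'_def)
      show ?thesis
        by (intro exI[of _ k] exI[of _ t'] exI[of _ lab]) (use A B D t0' alt in \<open>auto simp: t'_def\<close>)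
    qed
  qed
qed

lemma cover:
  fixes t :: "nat \<Rightarrow> real"
  shows "(\<forall>j\<le>k. t j < t (Suc j)) \<Longrightarrow> t 0 \<le> s \<Longrightarrow> s \<le> t (k+1) \<Longrightarrow> \<exists>j\<le>k. t j \<le> s \<and> s \<le> t (Suc j)"
proof (induction k)
  case 0 then show ?case by auto
next
  case (Suc k)
  show ?case
  proof (cases "s \<le> t (k+1)")
    case True
    have "\<forall>j\<le>k. t j < t (Suc j)" using Suc.prems(1) by auto
    then obtain j where "j \<le> k" "t j \<le> s \<and> s \<le> t (Suc j)" using Suc.IH Suc.prems(2) True by blast
    then show ?thesis by (intro exI[of _ j]) auto
  next
    case False then show ?thesis using Suc.prems by (intro exI[of _ "Suc k"]) auto
  qed
qed



lemma meas_eq: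
  fixes v :: "real measure"
  assumes sp: "space v = UNIV" and op: "\<forall>S. open S \<longrightarrow> S \<in> sets v"
    and pt: "\<forall>x. emeasure v {x} = 0" and sup: "emeasure v (-{0..1}) = 0"
    and fin: "finite Z" and t0: "t 0 = 0" and tk: "t (k+1) = 1" and inc: "\<forall>j\<le>k. t j < t (Suc j)"
    and int: "\<forall>j\<le>k. \<forall>s. t j < s \<and> s < t (Suc j) \<and> s \<notin> Z \<longrightarrow> L s = lab j"
    and S: "{s. s \<notin> Z \<and> L s = p} \<in> sets v"
  shows "emeasure v (\<Union>j\<in>{j. j \<le> k \<and> lab j = p}. {t j..t (Suc j)}) = emeasure v {s. s \<notin> Z \<and> L s = p}"
proof (rule emeasure_eq_AE)
  have bs: "sets borel \<subseteq> sets v" by (rule borel_sub[OF sp op])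
  define F where "F = Z \<union> t ` {..k+1}"
  have Ff: "finite F" using fin by (simp add: F_def)
  have Fn: "F \<in> null_sets v"
  proof (rule null_setsI)
    show "emeasure v F = 0" by (rule null_finite[OF sp op pt Ff])
    have "F \<in> sets borel" using Ff by (intro borel_closed finite_imp_closed)
    then show "F \<in> sets v" using bs by auto
  qed
  have Cn: "-{0..1::real} \<in> null_sets v"
    using sup bs by (auto intro!: null_setsI)
  have Nn: "F \<union> -{0..1} \<in> null_sets v" using Fn Cn by (rule null_sets.Un)
  have pw: "(x \<in> (\<Union>j\<in>{j. j \<le> k \<and> lab j = p}. {t j..t (Suc j)})) \<longleftrightarrow> x \<in> {s. s \<notin> Z \<and> L s = p}"
    if xF: "x \<notin> F" and x01: "x \<in> {0..1}" for x
  proof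
    assume "x \<in> (\<Union>j\<in>{j. j \<le> k \<and> lab j = p}. {t j..t (Suc j)})"
    then obtain j where j: "j \<le> k" "lab j = p" "t j \<le> x" "x \<le> t (Suc j)" by auto
    have "t j \<noteq> x" "t (Suc j) \<noteq> x" using xF j(1) by (auto simp: F_def)
    then have "t j < x" "x < t (Suc j)" using j by auto
    moreover have "x \<notin> Z" using xF by (auto simp: F_def)
    ultimately show "x \<in> {s. s \<notin> Z \<and> L s = p}" using int j by auto
  next
    assume "x \<in> {s. s \<notin> Z \<and> L s = p}"
    then have xZ: "x \<notin> Z" and Lx: "L x = p" by auto
    obtain j where j: "j \<le> k" "t j \<le> x" "x \<le> t (Suc j)"
      using cover[of k t x] inc t0 tk x01 by auto
    have "t j \<noteq> x" "t (Suc j) \<noteq> x" using xF j(1) by (auto simp: F_def)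
    then have "t j < x" "x < t (Suc j)" using j by auto
    then have "L x = lab j" using int j(1) xZ by auto
    then show "x \<in> (\<Union>j\<in>{j. j \<le> k \<and> lab j = p}. {t j..t (Suc j)})" using j Lx by auto
  qed
  show "AE x in v. (x \<in> (\<Union>j\<in>{j. j \<le> k \<and> lab j = p}. {t j..t (Suc j)})) \<longleftrightarrow> x \<in> {s. s \<notin> Z \<and> L s = p}"
    by (rule AE_I'[OF Nn]) (use pw in blast)
  show "(\<Union>j\<in>{j. j \<le> k \<and> lab j = p}. {t j..t (Suc j)}) \<in> sets v"
    using bs by (intro sets.finite_UN) auto
  show "{s. s \<notin> Z \<and> L s = p} \<in> sets v" by (rule S)
qed



definition dm :: "nat \<Rightarrow> real measure" where
  "dm j = density lborel (indicator {real j + 1 .. real j + 2})"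

lemma dm_props:
  shows "space (dm j) = UNIV" "sets (dm j) = sets borel"
    and "\<And>X. X \<in> sets borel \<Longrightarrow> emeasure (dm j) X = emeasure lborel ({real j + 1 .. real j + 2} \<inter> X)"
proof -
  show "space (dm j) = UNIV" by (simp add: dm_def)
  show "sets (dm j) = sets borel" by (simp add: dm_def)
  fix X :: "real set" assume "X \<in> sets borel"
  then show "emeasure (dm j) X = emeasure lborel ({real j + 1 .. real j + 2} \<inter> X)"
    unfolding dm_def by (intro emeasure_restricted) auto
qed

lemma dm_md: "mass_distribution (distr (dm j) borel gam)"
proof (rule push_md)
  show "space (dm j) = UNIV" by (rule dm_props(1))
  show "\<forall>S. open S \<longrightarrow> S \<in> sets (dm j)" by (simp add: dm_props(2) borel_open)
  have "emeasure (dm j) UNIV = 1" by (simp add: dm_props(3))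
  then show "0 < emeasure (dm j) UNIV" "emeasure (dm j) UNIV < \<infinity>" by auto
  show "\<forall>x. emeasure (dm j) {x} = 0"
  proof
    fix x
    have "countable ({real j + 1 .. real j + 2} \<inter> {x})" by (rule countable_finite) auto
    then show "emeasure (dm j) {x} = 0" by (simp add: dm_props(3) emeasure_lborel_countable del: Int_insert_right)
  qed
qed

lemma val_md:
  assumes "valuation_function v"
  shows "mass_distribution (distr v borel gam)" "space v = UNIV" "\<forall>S. open S \<longrightarrow> S \<in> sets v"
    "\<forall>x. emeasure v {x} = 0" "emeasure v (-{0..1}) = 0"
proof -
  have md: "mass_distribution v" and sup: "emeasure v (-{0..1}) = 0"
    using assms by (auto simp: valuation_function_def)
  show "space v = UNIV" "\<forall>S. open S \<longrightarrow> S \<in> sets v" "emeasure v (-{0..1}) = 0"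
    using md sup by (auto simp: mass_distribution_def)
  show pt: "\<forall>x. emeasure v {x} = 0"
    using md by (auto simp: mass_distribution_def)
  show "mass_distribution (distr v borel gam)"
    using md pt by (intro push_md) (auto simp: mass_distribution_def)
qed

lemma pre_sets: "{t. t \<notin> Zs A \<and> Ls A t = p} \<in> sets borel"
proof (cases p)
  case True
  then show ?thesis using measurable_sets_borel[OF gam_meas R_plus_borel[of A]] by (simp add: pre_plus)
next
  case False
  then show ?thesis using measurable_sets_borel[OF gam_meas R_minus_borel[of A]] by (simp add: pre_minus)
qed

lemma dummy_hit:
  assumes bis: "bisects A (distr (dm j) borel gam)"
  shows "\<exists>z\<in>Zs A. real j + 1 < z \<and> z < real j + 2"
proof (rule ccontr)
  assume "\<not> ?thesis"
  then have free: "{real j + 1<..<real j + 2} \<inter> Zs A = {}" by auto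
  have meas: "gam \<in> measurable (dm j) borel" using gam_meas by (simp add: measurable_def dm_props)
  let ?I = "{real j + 1 .. real j + 2}"
  have E: "emeasure (distr (dm j) borel gam) (if p then R_plus A else R_minus A)
        = emeasure lborel (?I \<inter> {t. t \<notin> Zs A \<and> Ls A t = p})" for p
    using emeasure_distr[OF meas, of "if p then R_plus A else R_minus A"] R_plus_borel R_minus_borel
      pre_sets[of A p]
    by (cases p) (auto simp: dm_props pre_plus pre_minus)
  define lam where "lam = Ls A (real j + 3/2)"
  have cL: "Ls A s = lam" if "s \<in> {real j + 1<..<real j + 2}" for s
    unfolding lam_def by (rule Ls_const[OF free that]) auto
  have big: "emeasure lborel (?I \<inter> {t. t \<notin> Zs A \<and> Ls A t = lam}) \<ge> 1"
  proof -
    have "{real j + 1<..<real j + 2} \<subseteq> ?I \<inter> {t. t \<notin> Zs A \<and> Ls A t = lam}"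
      using free cL by auto
    then have "emeasure lborel {real j + 1<..<real j + 2} \<le> emeasure lborel (?I \<inter> {t. t \<notin> Zs A \<and> Ls A t = lam})"
      using pre_sets[of A lam] by (intro emeasure_mono) auto
    then show ?thesis by simp
  qed
  have small: "emeasure lborel (?I \<inter> {t. t \<notin> Zs A \<and> Ls A t = (\<not> lam)}) = 0"
  proof -
    have "?I \<inter> {t. t \<notin> Zs A \<and> Ls A t = (\<not> lam)} \<subseteq> {real j + 1, real j + 2}"
      using cL by force
    then have "emeasure lborel (?I \<inter> {t. t \<notin> Zs A \<and> Ls A t = (\<not> lam)}) \<le> emeasure lborel {real j + 1, real j + 2}"
      by (intro emeasure_mono) auto
    also have "\<dots> = 0" by (intro emeasure_lborel_countable) auto
    finally show ?thesis by simp
  qed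
  have "emeasure lborel (?I \<inter> {t. t \<notin> Zs A \<and> Ls A t = lam}) = emeasure lborel (?I \<inter> {t. t \<notin> Zs A \<and> Ls A t = (\<not> lam)})"
    using bis E[of lam] E[of "\<not> lam"] by (cases lam) (auto simp: bisects_def)
  then show False using big small by simp
qed



theorem lemma2p1:
  assumes ham: "\<forall>m::nat. m \<ge> 1 \<longrightarrow>
      (\<forall>\<mu> :: nat \<Rightarrow> (real^2) measure.
         (\<forall>i<2*m. mass_distribution (\<mu> i)) \<longrightarrow>
         (\<exists>A. length A = m \<and> (\<forall>l\<in>set A. oriented_line l) \<and>
              (\<forall>i<2*m. bisects A (\<mu> i))))"
    and "n \<ge> 1"
    and "\<forall>i<n. valuation_function (v i)"
  shows "\<exists>k t lab. k \<le> n \<and> t 0 = 0 \<and> t (k+1) = (1::real) \<and>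
           (\<forall>j\<le>k. t j < t (Suc j)) \<and>
           (\<forall>j<k. lab j \<noteq> lab (Suc j)) \<and>
           (\<forall>i<n. emeasure (v i) (\<Union>j\<in>{j. j \<le> k \<and> lab j}. {t j..t (Suc j)})
                 = emeasure (v i) (\<Union>j\<in>{j. j \<le> k \<and> \<not> lab j}. {t j..t (Suc j)}))"
proof -
  note val = assms(3)
  define \<mu> where "\<mu> = (\<lambda>i. if i < n then distr (v i) borel gam else distr (dm (i - n)) borel gam)"
  have "\<forall>i<2*n. mass_distribution (\<mu> i)"
    using val val_md(1) dm_md by (auto simp: \<mu>_def)
  then obtain A where lenA: "length A = n" and orA: "\<forall>l\<in>set A. oriented_line l"
    and bis: "\<forall>i<2*n. bisects A (\<mu> i)"
    using ham assms(2) by blast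
  let ?Z = "Zs A"
  have Zf: "finite ?Z" and Zc: "card ?Z \<le> 2 * n" using Zs_fin[OF orA] lenA by auto
  have hit: "\<exists>z\<in>?Z. real j + 1 < z \<and> z < real j + 2" if "j < n" for j
  proof (rule dummy_hit)
    have "bisects A (\<mu> (n + j))" using bis that by auto
    then show "bisects A (distr (dm j) borel gam)" by (simp add: \<mu>_def)
  qed
  then obtain zf where zf: "\<And>j. j < n \<Longrightarrow> zf j \<in> ?Z \<and> real j + 1 < zf j \<and> zf j < real j + 2"
    by metis
  have inj: "inj_on zf {..<n}"
  proof (rule inj_onI)
    fix i j assume "i \<in> {..<n}" "j \<in> {..<n}" "zf i = zf j"
    then have "real i + 1 < real j + 2" "real j + 1 < real i + 2" using zf[of i] zf[of j] by auto
    then show "i = j" by linarith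
  qed
  have cardn: "card (?Z \<inter> {0<..<1}) \<le> n"
  proof -
    have disj: "(?Z \<inter> {0<..<1}) \<inter> zf ` {..<n} = {}" using zf by fastforce
    have sub: "(?Z \<inter> {0<..<1}) \<union> zf ` {..<n} \<subseteq> ?Z" using zf by auto
    have "card (?Z \<inter> {0<..<1}) + card (zf ` {..<n}) = card ((?Z \<inter> {0<..<1}) \<union> zf ` {..<n})"
      using Zf disj by (intro card_Un_disjoint[symmetric]) auto
    also have "\<dots> \<le> card ?Z" using sub Zf by (rule card_mono[rotated])
    finally show ?thesis using Zc card_image[OF inj] by simp
  qed
  obtain k t lab where k: "k \<le> card (?Z \<inter> {0<..<1})" and t0: "t 0 = 0" and tk: "t (k+1) = 1"
    and inc: "\<forall>j\<le>k. t j < t (Suc j)" and alt: "\<forall>j<k. lab j \<noteq> lab (Suc j)"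
    and int: "\<forall>j\<le>k. \<forall>s. t j < s \<and> s < t (Suc j) \<and> s \<notin> ?Z \<longrightarrow> Ls A s = lab j"
  proof -
    have c: "\<And>a b s t. {a<..<b} \<inter> ?Z = {} \<Longrightarrow> s \<in> {a<..<b} \<Longrightarrow> t \<in> {a<..<b} \<Longrightarrow> Ls A s = Ls A t"
      by (rule Ls_const)
    have "\<exists>k t lab. k \<le> card (?Z \<inter> {0<..<1}) \<and> t 0 = 0 \<and> t (k+1) = (1::real) \<and>
     (\<forall>j\<le>k. t j < t (Suc j)) \<and> (\<forall>j<k. lab j \<noteq> lab (Suc j)) \<and>
     (\<forall>j\<le>k. \<forall>s. t j < s \<and> s < t (Suc j) \<and> s \<notin> ?Z \<longrightarrow> Ls A s = lab j)"
      using partition_exists[OF Zf c, where b=1] by simp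
    then show ?thesis using that by blast
  qed
  have eqi: "emeasure (v i) (\<Union>j\<in>{j. j \<le> k \<and> lab j}. {t j..t (Suc j)})
                 = emeasure (v i) (\<Union>j\<in>{j. j \<le> k \<and> \<not> lab j}. {t j..t (Suc j)})" if i: "i < n" for i
  proof -
    have vi: "valuation_function (v i)" using val i by auto
    note V = val_md[OF vi]
    have bs: "sets borel \<subseteq> sets (v i)" by (rule borel_sub[OF V(2,3)])
    have meas: "gam \<in> measurable (v i) borel" by (rule meas_from[OF V(2,3) gam_meas])
    have ME: "emeasure (v i) (\<Union>j\<in>{j. j \<le> k \<and> lab j = p}. {t j..t (Suc j)}) = emeasure (v i) {s. s \<notin> ?Z \<and> Ls A s = p}" for p
      by (rule meas_eq[OF V(2,3,4,5) Zf t0 tk inc int]) (use pre_sets[of A p] bs in blast)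
    have "emeasure (v i) {s. s \<notin> ?Z \<and> Ls A s = True} = emeasure (\<mu> i) (R_plus A)"
      using emeasure_distr[OF meas R_plus_borel[of A]] V(2) i by (simp add: \<mu>_def pre_plus)
    also have "\<dots> = emeasure (\<mu> i) (R_minus A)" using bis i by (auto simp: bisects_def)
    also have "\<dots> = emeasure (v i) {s. s \<notin> ?Z \<and> Ls A s = False}"
      using emeasure_distr[OF meas R_minus_borel[of A]] V(2) i by (simp add: \<mu>_def pre_minus)
    finally show ?thesis using ME[of True] ME[of False] by simp
  qed
  show ?thesis
    using k cardn t0 tk inc alt eqi
    by (intro exI[of _ k] exI[of _ t] exI[of _ lab]) auto
qed

end
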